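(* For each $n\ge 0$ there is a bijection $\phi$ from the set of Dyck $n$-paths to itself such that: (1) for every Dyck path $P$, the number of valleys $DU$ in $P$ equals the number of occurrences of $DXD$ in $\phi(P)$; (2) $\phi$ restricts to a bijection from the Dyck $n$-paths whose terminal descent has even length (including the empty path) onto the hill-free Dyck $n$-paths; (3) $\phi$ restricts to a bijection from the nonempty Dyck $n$-paths all of whose descents to ground level have odd length onto the Dyck $n$-paths that start $UD$.
   Context: A Dyck $n$-path is a path from $(0,0)$ to $(2n,0)$ with $n$ upsteps $U=(1,1)$ and $n$ downsteps $D=(1,-1)$ never going below the $x$-axis, written as a word in $U,D$. A valley is an occurrence of $DU$; a $DXD$ is an occurrence of $DUD$ or $DDD$ as consecutive steps. A descent is a maximal run of consecutive $D$s; the terminal descent is the last descent (length $0$ for the empty path). A descent to ground level is a descent ending on the $x$-axis. A hill is a peak $UD$ whose top vertex is at height $1$; a path is hill-free if it has no hills. *)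

theory Defs
  imports Main
begin

datatype step = U | D

definition ht :: "step list \<Rightarrow> int" where
  "ht w = int (count_list w U) - int (count_list w D)"

definition dyck :: "nat \<Rightarrow> step list \<Rightarrow> bool" where
  "dyck n w \<longleftrightarrow> length w = 2 * n \<and> ht w = 0 \<and>
     (\<forall>k \<le> length w. ht (take k w) \<ge> 0)"

definition dyck_paths :: "nat \<Rightarrow> step list set" where
  "dyck_paths n = {w. dyck n w}"

definition valleys :: "step list \<Rightarrow> nat" where
  "valleys w = card {i. i + 1 < length w \<and> w ! i = D \<and> w ! (i+1) = U}"

definition dxd :: "step list \<Rightarrow> nat" where
  "dxd w = card {i. i + 2 < length w \<and> w ! i = D \<and> w ! (i+2) = D}"

definition term_desc :: "step list \<Rightarrow> nat" where
  "term_desc w = length (takeWhile (\<lambda>s. s = D) (rev w))"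

(* A descent ends at j iff w!(j-1) = D and
   (j = length w or w!j = U). *)
definition all_ground_desc_odd :: "step list \<Rightarrow> bool" where
  "all_ground_desc_odd w \<longleftrightarrow>
     (\<forall>j. 0 < j \<and> j \<le> length w \<and> w ! (j - 1) = D \<and> (j = length w \<or> w ! j = U)
          \<and> ht (take j w) = 0
        \<longrightarrow> odd (length (takeWhile (\<lambda>s. s = D) (rev (take j w)))))"

definition hill_free :: "step list \<Rightarrow> bool" where
  "hill_free w \<longleftrightarrow>
     \<not> (\<exists>i. i + 1 < length w \<and> w ! i = U \<and> w ! (i+1) = D \<and> ht (take (i+1) w) = 1)"

definition starts_UD :: "step list \<Rightarrow> bool" where
  "starts_UD w \<longleftrightarrow> take 2 w = [U, D]"

end

theory Submission
  imports Defs
begin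

datatype tr = Lf | Nd tr tr

fun sz :: "tr \<Rightarrow> nat" where
  "sz Lf = 0" | "sz (Nd a b) = Suc (sz a + sz b)"
fun lp :: "tr \<Rightarrow> nat" where
  "lp Lf = 0" | "lp (Nd a b) = Suc (lp a)"
fun V :: "tr \<Rightarrow> nat" where
  "V Lf = 0" | "V (Nd a b) = V a + V b + (if b = Lf then 0 else 1)"
fun Dx :: "tr \<Rightarrow> nat" where
  "Dx Lf = 0"
| "Dx (Nd r z) = Dx z + Dx r + (if r = Lf then (if z = Lf then 0 else 1) else (if 2 \<le> lp r then 1 else 0))"
fun hf :: "tr \<Rightarrow> bool" where
  "hf Lf = True" | "hf (Nd r z) = (r \<noteq> Lf \<and> hf z)"
fun su :: "tr \<Rightarrow> bool" where
  "su Lf = False" | "su (Nd r z) = (if z = Lf then r = Lf else su z)"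
fun ag :: "tr \<Rightarrow> bool" where
  "ag Lf = True" | "ag (Nd a b) = (ag b \<and> even (lp a))"

fun Phi :: "tr \<Rightarrow> tr" where
  "Phi Lf = Lf"
| "Phi (Nd Lf b) = Nd Lf (Phi b)"
| "Phi (Nd (Nd Lf a2) b) = Nd (Phi (Nd a2 b)) Lf"
| "Phi (Nd (Nd (Nd c1 c2) a2) b) = (if odd (lp c1) then Nd (Phi (Nd a2 b)) (Phi (Nd c1 c2))
      else Nd (Phi (Nd a2 c2)) (Phi (Nd c1 b)))"

lemma Phi_Lf_iff[simp]: "Phi t = Lf \<longleftrightarrow> t = Lf"
  by (induction t rule: Phi.induct) auto

lemma Phi_Lf_iff2[simp]: "Lf = Phi t \<longleftrightarrow> t = Lf"
  by (metis Phi_Lf_iff)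

lemma Phi_sz[simp]: "sz (Phi t) = sz t"
  by (induction t rule: Phi.induct) auto

lemma lp_0[simp]: "lp t = 0 \<longleftrightarrow> t = Lf" "0 < lp t \<longleftrightarrow> t \<noteq> Lf"
  by (cases t; simp)+

lemma Phi_lp: "2 \<le> lp (Phi (Nd a b)) \<longleftrightarrow> a \<noteq> Lf"
  by (cases "Nd a b" rule: Phi.cases) (auto simp: Suc_le_eq gr0_conv_Suc[symmetric])

lemma Phi_V: "Dx (Phi t) = V t"
proof (induction t rule: Phi.induct)
  case (3 a2 b)
  then show ?case using Phi_lp[of a2 b] by auto
next
  case (4 c1 c2 a2 b)
  then show ?case using Phi_lp[of a2 b] Phi_lp[of a2 c2] by auto
qed auto

lemma Phi_hf: "hf (Phi t) \<longleftrightarrow> even (lp t)"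
  by (induction t rule: Phi.induct) auto

lemma Phi_su: "su (Phi t) \<longleftrightarrow> (t \<noteq> Lf \<and> ag t)"
  by (induction t rule: Phi.induct) (auto simp: Phi_hf)

lemma Phi_inj: "Phi s = Phi t \<Longrightarrow> s = t"
proof (induction s arbitrary: t rule: Phi.induct)
  case 1
  then show ?case by (metis Phi_Lf_iff)
next
  case (2 b)
  then show ?case by (cases t rule: Phi.cases) (auto split: if_splits)
next
  case (3 a2 b)
  then show ?case by (cases t rule: Phi.cases) (auto split: if_splits)
next
  case (4 c1 c2 a2 b)
  then show ?case
    by (cases t rule: Phi.cases) (auto split: if_splits)
qed

fun enc :: "tr \<Rightarrow> step list" where
  "enc Lf = []" | "enc (Nd a b) = enc b @ U # enc a @ [D]"

lemma ht_Nil[simp]: "ht [] = 0" by (simp add: ht_def)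
lemma ht_Cons[simp]: "ht (x # w) = (if x = U then 1 else -1) + ht w"
  by (cases x) (auto simp: ht_def)
lemma ht_append[simp]: "ht (xs @ ys) = ht xs + ht ys"
  by (induction xs) auto

lemma enc_len[simp]: "length (enc t) = 2 * sz t"
  by (induction t) auto
lemma enc_ht[simp]: "ht (enc t) = 0"
  by (induction t) auto
lemma enc_Nil_iff[simp]: "enc t = [] \<longleftrightarrow> t = Lf"
  by (cases t) auto

lemma enc_prefix: "0 \<le> ht (take k (enc t))"
proof (induction t arbitrary: k)
  case Lf
  then show ?case by simp
next
  case (Nd a b)
  show ?case
  proof (cases "k \<le> length (enc b)")
    case True
    then show ?thesis using Nd by simp
  next
    case False
    then obtain j where k: "k = length (enc b) + Suc j" by (metis add_Suc_right less_imp_Suc_add not_le)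
    show ?thesis
    proof (cases "j \<le> length (enc a)")
      case True
      then show ?thesis using Nd(1)[of j] k by simp
    next
      case False
      then have "take k (enc (Nd a b)) = enc (Nd a b)" using k by simp
      then show ?thesis by simp
    qed
  qed
qed

lemma enc_prefix_pos: "j \<le> length (enc a) \<Longrightarrow> 1 \<le> ht (take (length (enc b) + Suc j) (enc (Nd a b)))"
  using enc_prefix[of j a] by simp

lemma enc_no_smaller:
  assumes e: "enc (Nd a b) = enc (Nd a' b')"
  shows "\<not> length (enc b) < length (enc b')"
proof
  assume lt: "length (enc b) < length (enc b')"
  define k where "k = length (enc b')"
  have "length (enc (Nd a b)) = length (enc (Nd a' b'))" using e by (rule arg_cong)
  then have le: "k + 2 \<le> length (enc b) + length (enc a) + 2" unfolding k_def by (simp del: enc_len)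
  define j where "j = k - length (enc b) - 1"
  have kj: "k = length (enc b) + Suc j" using lt unfolding j_def k_def by simp
  have jle: "j \<le> length (enc a)" using le kj by simp
  have A: "1 \<le> ht (take k (enc (Nd a b)))" using enc_prefix_pos[OF jle, of b] kj by simp
  have B: "take k (enc (Nd a' b')) = enc b'" unfolding k_def by (simp del: enc_len)
  have "ht (take k (enc (Nd a b))) = 0" using B e by (metis enc_ht)
  then show False using A by simp
qed

lemma enc_inj: "enc s = enc t \<Longrightarrow> s = t"
proof (induction s arbitrary: t)
  case Lf
  then show ?case by (metis enc_Nil_iff)
next
  case (Nd a b)
  then obtain a' b' where t: "t = Nd a' b'" by (cases t) auto
  have e: "enc (Nd a b) = enc (Nd a' b')" using Nd t by simp
  have "length (enc b) = length (enc b')"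
    using enc_no_smaller[OF e] enc_no_smaller[OF e[symmetric]] by linarith
  then have "enc b = enc b' \<and> enc a = enc a'" using e by auto
  then show ?case using Nd t by simp
qed

lemma enc_surj_gen:
  "(\<forall>k \<le> length w. 0 \<le> ht (take k w)) \<Longrightarrow>
   \<exists>t0 ts. w = enc t0 @ concat (map (\<lambda>t. U # enc t) ts) \<and> int (length ts) = ht w"
proof (induction w rule: rev_induct)
  case Nil
  then show ?case by (intro exI[of _ Lf] exI[of _ "[]"]) simp
next
  case (snoc x w)
  have "\<forall>k \<le> length w. 0 \<le> ht (take k w)"
  proof (intro allI impI)
    fix k assume "k \<le> length w"
    then show "0 \<le> ht (take k w)" using snoc.prems[rule_format, of k] by simp
  qed
  then obtain t0 ts where w: "w = enc t0 @ concat (map (\<lambda>t. U # enc t) ts)" and l: "int (length ts) = ht w"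
    using snoc.IH by blast
  show ?case
  proof (cases x)
    case U
    then show ?thesis using w l by (intro exI[of _ t0] exI[of _ "ts @ [Lf]"]) simp
  next
    case D
    have "0 \<le> ht (take (length (w @ [x])) (w @ [x]))" using snoc.prems by blast
    then have "1 \<le> ht w" using D by simp
    then have "ts \<noteq> []" using l by auto
    then obtain ts' tl where ts: "ts = ts' @ [tl]" by (metis rev_exhaust)
    show ?thesis
    proof (cases ts' rule: rev_exhaust)
      case Nil
      then show ?thesis using w l ts D by (intro exI[of _ "Nd tl t0"] exI[of _ "[]"]) simp
    next
      case (snoc ts'' s)
      then show ?thesis using w l ts D by (intro exI[of _ t0] exI[of _ "ts'' @ [Nd tl s]"]) simp
    qed
  qed
qed

definition bal :: "step list \<Rightarrow> bool" where
  "bal w \<longleftrightarrow> ht w = 0 \<and> (\<forall>k \<le> length w. 0 \<le> ht (take k w))"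

lemma bal_enc: "bal w \<longleftrightarrow> (\<exists>t. w = enc t)"
proof
  assume "bal w"
  then obtain t0 ts where "w = enc t0 @ concat (map (\<lambda>t. U # enc t) ts)" "int (length ts) = ht w"
    using enc_surj_gen unfolding bal_def by blast
  then show "\<exists>t. w = enc t" using \<open>bal w\<close> unfolding bal_def by auto
next
  assume "\<exists>t. w = enc t"
  then show "bal w" unfolding bal_def using enc_prefix by auto
qed

lemma dyck_enc: "dyck n w \<longleftrightarrow> (\<exists>t. w = enc t \<and> sz t = n)"
  using bal_enc[of w] unfolding dyck_def bal_def by auto

definition cnt :: "(step list \<Rightarrow> bool) \<Rightarrow> step list \<Rightarrow> nat" where
  "cnt P w = card {i. i < length w \<and> P (drop i w)}"

lemma cnt_Nil[simp]: "cnt P [] = 0" by (simp add: cnt_def)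

lemma cnt_Cons[simp]: "cnt P (x # w) = (if P (x # w) then 1 else 0) + cnt P w"
proof -
  have e: "{i. i < length (x#w) \<and> P (drop i (x#w))} = {i. i = 0 \<and> P (x#w)} \<union> Suc ` {i. i < length w \<and> P (drop i w)}"
  proof (rule set_eqI)
    fix i show "i \<in> {i. i < length (x#w) \<and> P (drop i (x#w))} \<longleftrightarrow> i \<in> {i. i = 0 \<and> P (x#w)} \<union> Suc ` {i. i < length w \<and> P (drop i w)}"
      by (cases i) auto
  qed
  have f: "finite (Suc ` {i. i < length w \<and> P (drop i w)})" by simp
  have "0 \<notin> Suc ` {i. i < length w \<and> P (drop i w)}" by auto
  then show ?thesis unfolding cnt_def e
    by (cases "P (x#w)") (auto simp: card_image)
qed

fun pv :: "step list \<Rightarrow> bool" where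
  "pv (D # U # _) = True" | "pv _ = False"
fun pd :: "step list \<Rightarrow> bool" where
  "pd (D # _ # D # _) = True" | "pd _ = False"

lemma drop2: "Suc i < length w \<Longrightarrow> drop i w = w ! i # w ! (Suc i) # drop (Suc (Suc i)) w"
  by (simp add: Cons_nth_drop_Suc)
lemma drop3: "Suc (Suc i) < length w \<Longrightarrow> drop i w = w ! i # w ! (Suc i) # w ! (Suc (Suc i)) # drop (Suc (Suc (Suc i))) w"
  by (simp add: Cons_nth_drop_Suc)

lemma pv2: "pv (x # y # r) \<longleftrightarrow> x = D \<and> y = U"
  by (cases x; cases y) auto
lemma pd3: "pd (x # y # z # r) \<longleftrightarrow> x = D \<and> z = D"
  by (cases x; cases z) auto

lemma pv_drop: "pv (drop i w) \<longleftrightarrow> i + 1 < length w \<and> w ! i = D \<and> w ! (i+1) = U"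
proof (cases "i + 1 < length w")
  case True
  then have "drop i w = w ! i # w ! (i+1) # drop (i+2) w"
    using drop2[of i w] by simp
  then show ?thesis using True by (cases "w ! i"; cases "w ! (i+1)") auto
next
  case False
  then have "length (drop i w) \<le> 1" by simp
  then have "pv (drop i w) = False" by (cases "drop i w" rule: pv.cases) auto
  then show ?thesis using False by simp
qed

lemma pd_drop: "pd (drop i w) \<longleftrightarrow> i + 2 < length w \<and> w ! i = D \<and> w ! (i+2) = D"
proof (cases "i + 2 < length w")
  case True
  then have e: "drop i w = w ! i # w ! (Suc i) # w ! (Suc (Suc i)) # drop (Suc (Suc (Suc i))) w"
    using drop3[of i w] by simp
  have "pd (drop i w) \<longleftrightarrow> w ! i = D \<and> w ! (Suc (Suc i)) = D"
    unfolding e by (cases "w ! i"; cases "w ! (Suc (Suc i))") auto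
  then show ?thesis using True by (simp add: add_2_eq_Suc')
next
  case False
  then have "length (drop i w) \<le> 2" by simp
  then have "pd (drop i w) = False" by (cases "drop i w" rule: pd.cases) auto
  then show ?thesis using False by simp
qed

lemma valleys_cnt: "valleys w = cnt pv w"
  unfolding valleys_def cnt_def
  by (rule arg_cong[where f=card]) (auto simp: pv_drop)

lemma dxd_cnt: "dxd w = cnt pd w"
  unfolding dxd_def cnt_def
  by (rule arg_cong[where f=card]) (auto simp: pd_drop)

lemma cnt_pv_append: "cnt pv (xs @ ys) = cnt pv xs + cnt pv (drop (length xs - 1) xs @ ys)"
proof (induction xs)
  case (Cons x xs)
  show ?case
  proof (cases xs)
    case Nil
    then show ?thesis by simp
  next
    case (Cons y zs)
    have "cnt pv ((x # xs) @ ys) = (if pv (x # y # zs @ ys) then 1 else 0) + cnt pv (xs @ ys)"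
      using Cons by simp
    also have "\<dots> = (if pv (x # y # zs) then 1 else 0) + cnt pv xs + cnt pv (drop (length xs - 1) xs @ ys)"
      using Cons.IH by (simp add: pv2)
    also have "\<dots> = cnt pv (x # xs) + cnt pv (drop (length (x # xs) - 1) (x # xs) @ ys)"
      using Cons by simp
    finally show ?thesis .
  qed
qed simp

lemma cnt_pd_le2: "length xs \<le> 2 \<Longrightarrow> cnt pd xs = 0"
  by (simp add: cnt_def pd_drop)

lemma cnt_pd_append: "cnt pd (xs @ ys) = cnt pd xs + cnt pd (drop (length xs - 2) xs @ ys)"
proof (induction xs)
  case (Cons x xs)
  show ?case
  proof (cases "length xs \<ge> 2")
    case False
    then have "drop (length (x # xs) - 2) (x # xs) = x # xs" by simp
    moreover have "cnt pd (x # xs) = 0" using False by (intro cnt_pd_le2) simp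
    ultimately show ?thesis by simp
  next
    case True
    then obtain y z zs where c: "xs = y # z # zs" using True by (cases xs; cases "tl xs") auto
    have "cnt pd ((x # xs) @ ys) = (if pd (x # y # z # zs @ ys) then 1 else 0) + cnt pd (xs @ ys)"
      using c by simp
    also have "\<dots> = (if pd (x # y # z # zs) then 1 else 0) + cnt pd xs + cnt pd (drop (length xs - 2) xs @ ys)"
      using Cons.IH by (simp add: pd3)
    also have "\<dots> = cnt pd (x # xs) + cnt pd (drop (length (x # xs) - 2) (x # xs) @ ys)"
      using c by (simp add: Suc_diff_le)
    finally show ?thesis .
  qed
qed simp

lemma hd_enc: "t \<noteq> Lf \<Longrightarrow> \<exists>r. enc t = U # r"
proof (induction t)
  case (Nd a b)
  then show ?case by (cases "b = Lf") auto
qed simp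

lemma last1: "t \<noteq> Lf \<Longrightarrow> drop (length (enc t) - 1) (enc t) = [D]"
  by (cases t) auto

lemma last2: "drop (length (enc (Nd a b)) - 2) (enc (Nd a b)) = (if a = Lf then [U,D] else [D,D])"
proof (cases "a = Lf")
  case True
  then show ?thesis by simp
next
  case False
  have l: "drop (length (enc a) - 1) (enc a) = [D]" using last1[OF False] .
  have p: "length (enc a) \<ge> 1" using False by (cases a) auto
  obtain k where k: "length (enc a) = Suc k" using p by (cases "length (enc a)") auto
  have "drop (length (enc (Nd a b)) - 2) (enc (Nd a b)) = drop (length (enc a) - 1) (enc a) @ [D]"
    by (simp del: enc_len add: k)
  then show ?thesis using l False by simp
qed

lemma cnt_pv_encD: "cnt pv (enc a @ [D]) = cnt pv (enc a)"
proof (cases "a = Lf")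
  case False
  have e: "cnt pv (enc a @ [D]) = cnt pv (enc a) + cnt pv (drop (length (enc a) - 1) (enc a) @ [D])"
    by (rule cnt_pv_append)
  show ?thesis unfolding e last1[OF False] by simp
qed simp

lemma valleys_enc: "valleys (enc t) = V t"
proof (induction t)
  case (Nd a b)
  have "cnt pv (enc (Nd a b)) = cnt pv (enc b) + cnt pv (drop (length (enc b) - 1) (enc b) @ U # enc a @ [D])"
    by (simp add: cnt_pv_append[of "enc b" "U # enc a @ [D]"] del: enc_len)
  also have "\<dots> = V b + V a + (if b = Lf then 0 else 1)"
  proof (cases "b = Lf")
    case True
    then show ?thesis using Nd by (simp add: valleys_cnt cnt_pv_encD)
  next
    case False
    show ?thesis unfolding last1[OF False] using Nd False by (simp add: valleys_cnt cnt_pv_encD)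
  qed
  finally show ?case by (simp add: valleys_cnt)
qed (simp add: valleys_cnt)


lemma dxd_enc: "dxd (enc t) = Dx t"
proof (induction t)
  case (Nd r z)
  have A: "cnt pd (enc r @ [D]) = cnt pd (enc r) + (if r \<noteq> Lf \<and> 2 \<le> lp r then 1 else 0)"
  proof (cases r)
    case Lf then show ?thesis by simp
  next
    case (Nd a b)
    have "cnt pd (enc r @ [D]) = cnt pd (enc r) + cnt pd (drop (length (enc r) - 2) (enc r) @ [D])"
      by (rule cnt_pd_append)
    then show ?thesis using last2[of a b] Nd by (simp add: Suc_le_eq)
  qed
  have B: "(D # U # enc r @ [D]) = (if r = Lf then [D,U,D] else D # U # U # tl (enc r) @ [D])"
    using hd_enc[of r] by auto
  have "cnt pd (enc (Nd r z)) = cnt pd (enc z) + cnt pd (drop (length (enc z) - 2) (enc z) @ U # enc r @ [D])"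
    by (simp add: cnt_pd_append[of "enc z" "U # enc r @ [D]"] del: enc_len)
  also have "\<dots> = Dx z + cnt pd (drop (length (enc z) - 2) (enc z) @ U # enc r @ [D])"
    using Nd by (simp add: dxd_cnt)
  also have "cnt pd (drop (length (enc z) - 2) (enc z) @ U # enc r @ [D]) = 
     (if z \<noteq> Lf \<and> r = Lf then 1 else 0) + cnt pd (enc r @ [D])"
  proof (cases z)
    case Lf then show ?thesis by simp
  next
    case (Nd a b)
    have "cnt pd (drop (length (enc z) - 2) (enc z) @ U # enc r @ [D]) = 
       cnt pd ((if a = Lf then U else D) # D # U # enc r @ [D])"
      using last2[of a b] Nd by simp
    also have "\<dots> = cnt pd (D # U # enc r @ [D])" by simp
    also have "\<dots> = (if r = Lf then 1 else 0) + cnt pd (enc r @ [D])"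
    proof (cases "r = Lf")
      case False
      then obtain rr where "enc r = U # rr" using hd_enc by blast
      then show ?thesis using False by simp
    qed simp
    finally show ?thesis using Nd by simp
  qed
  finally show ?case using A Nd by (simp add: dxd_cnt)
qed (simp add: dxd_cnt)

lemma td_enc: "term_desc (enc t) = lp t"
proof (induction t)
  case Lf
  then show ?case by (simp add: term_desc_def)
next
  case (Nd a b)
  have "takeWhile (\<lambda>s. s = D) (rev (enc a) @ U # rev (enc b)) = takeWhile (\<lambda>s. s = D) (rev (enc a))"
  proof (cases "a = Lf")
    case False
    then obtain r where "enc a = U # r" using hd_enc by blast
    then have "U \<in> set (rev (enc a))" by simp
    then show ?thesis by (intro takeWhile_append1) auto
  qed simp
  then show ?case using Nd by (simp add: term_desc_def)
qed

lemma su_enc: "starts_UD (enc t) \<longleftrightarrow> su t"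
proof (induction t)
  case Lf
  then show ?case by (simp add: starts_UD_def)
next
  case (Nd a b)
  show ?case
  proof (cases "b = Lf")
    case True
    show ?thesis
    proof (cases "a = Lf")
      case False
      then obtain r where "enc a = U # r" using hd_enc by blast
      then show ?thesis using True False by (simp add: starts_UD_def)
    qed (simp add: True starts_UD_def)
  next
    case False
    then have "length (enc b) \<ge> 2" by (cases b) auto
    then have "take 2 (enc (Nd a b)) = take 2 (enc b)" by (simp del: enc_len)
    moreover have "su (Nd a b) = su b" using False by simp
    ultimately show ?thesis using Nd.IH(2) by (simp add: starts_UD_def)
  qed
qed

fun ph :: "step list \<Rightarrow> bool" where
  "ph (U # D # _) = True" | "ph _ = False"

fun hl :: "int \<Rightarrow> step list \<Rightarrow> bool" where
  "hl h [] = False"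
| "hl h (x # w) = ((ph (x # w) \<and> h = 0) \<or> hl (h + (if x = U then 1 else -1)) w)"

lemma ph2: "ph (x # y # r) \<longleftrightarrow> x = U \<and> y = D"
  by (cases x; cases y) auto

lemma ph_drop: "ph (drop i w) \<longleftrightarrow> i + 1 < length w \<and> w ! i = U \<and> w ! (i+1) = D"
proof (cases "i + 1 < length w")
  case True
  then have "drop i w = w ! i # w ! (Suc i) # drop (Suc (Suc i)) w"
    using drop2[of i w] by simp
  then show ?thesis using True by (simp add: ph2)
next
  case False
  then have "length (drop i w) \<le> 1" by simp
  then have "ph (drop i w) = False" by (cases "drop i w" rule: ph.cases) auto
  then show ?thesis using False by simp
qed

lemma hl_iff: "hl h w \<longleftrightarrow> (\<exists>i < length w. ph (drop i w) \<and> h + ht (take i w) = 0)"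
proof (induction w arbitrary: h)
  case Nil
  then show ?case by simp
next
  case (Cons x w)
  show ?case
  proof
    assume "hl h (x # w)"
    then show "\<exists>i < length (x # w). ph (drop i (x # w)) \<and> h + ht (take i (x # w)) = 0"
    proof (cases "ph (x # w) \<and> h = 0")
      case True
      then show ?thesis by (intro exI[of _ 0]) simp
    next
      case False
      then have "hl (h + (if x = U then 1 else -1)) w" using \<open>hl h (x # w)\<close> by (simp only: hl.simps) blast
      then obtain i where "i < length w" "ph (drop i w)" "(h + (if x = U then 1 else -1)) + ht (take i w) = 0"
        using Cons.IH by blast
      then show ?thesis by (intro exI[of _ "Suc i"]) (simp add: algebra_simps)
    qed
  next
    assume "\<exists>i < length (x # w). ph (drop i (x # w)) \<and> h + ht (take i (x # w)) = 0"
    then obtain i where i: "i < length (x # w)" "ph (drop i (x # w))" "h + ht (take i (x # w)) = 0" by blast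
    show "hl h (x # w)"
    proof (cases i)
      case 0
      then show ?thesis using i by simp
    next
      case (Suc j)
      then have "hl (h + (if x = U then 1 else -1)) w" using i Cons.IH
        by (auto simp: algebra_simps)
      then show ?thesis by simp
    qed
  qed
qed

lemma hill_free_hl: "hill_free w \<longleftrightarrow> \<not> hl 0 w"
proof -
  have "(\<exists>i. i + 1 < length w \<and> w ! i = U \<and> w ! (i+1) = D \<and> ht (take (i+1) w) = 1)
     \<longleftrightarrow> (\<exists>i < length w. ph (drop i w) \<and> 0 + ht (take i w) = 0)"
  proof
    assume "\<exists>i. i + 1 < length w \<and> w ! i = U \<and> w ! (i+1) = D \<and> ht (take (i+1) w) = 1"
    then obtain i where i: "i + 1 < length w" "w ! i = U" "w ! (i+1) = D" "ht (take (i+1) w) = 1" by blast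
    have "take (i+1) w = take i w @ [w ! i]" using i(1) by (simp add: take_Suc_conv_app_nth)
    then have "ht (take i w) = 0" using i by simp
    then show "\<exists>i < length w. ph (drop i w) \<and> 0 + ht (take i w) = 0" using i ph_drop[of i w]
      by (intro exI[of _ i]) auto
  next
    assume "\<exists>i < length w. ph (drop i w) \<and> 0 + ht (take i w) = 0"
    then obtain i where i: "i < length w" "ph (drop i w)" "ht (take i w) = 0" by auto
    then have j: "i + 1 < length w" "w ! i = U" "w ! (i+1) = D" using ph_drop by auto
    have "take (i+1) w = take i w @ [w ! i]" using j(1) by (simp add: take_Suc_conv_app_nth)
    then have "ht (take (i+1) w) = 1" using i j by simp
    then show "\<exists>i. i + 1 < length w \<and> w ! i = U \<and> w ! (i+1) = D \<and> ht (take (i+1) w) = 1"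
      using j by blast
  qed
  then show ?thesis unfolding hill_free_def hl_iff by blast
qed

lemma hl_append: "xs = [] \<or> last xs = D \<Longrightarrow> hl h (xs @ ys) \<longleftrightarrow> hl h xs \<or> hl (h + ht xs) ys"
proof (induction xs arbitrary: h)
  case Nil
  then show ?case by simp
next
  case (Cons x xs)
  show ?case
  proof (cases xs)
    case Nil
    then have "x = D" using Cons.prems by simp
    then show ?thesis using Nil by (cases ys rule: ph.cases) (auto simp: algebra_simps)
  next
    case (Cons y zs)
    then have "last xs = D" using Cons.prems by simp
    then show ?thesis using Cons Cons.IH[of "h + (if x = U then 1 else -1)"] by (auto simp: ph2 algebra_simps)
  qed
qed

lemma hl_enc_pos: "1 \<le> h \<Longrightarrow> \<not> hl h (enc t)"
proof
  assume "1 \<le> h" "hl h (enc t)"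
  then obtain i where "h + ht (take i (enc t)) = 0" unfolding hl_iff by blast
  moreover have "0 \<le> ht (take i (enc t))" by (rule enc_prefix)
  ultimately show False using \<open>1 \<le> h\<close> by simp
qed

lemma last_enc: "t \<noteq> Lf \<Longrightarrow> last (enc t) = D"
  by (cases t) auto

lemma hf_enc: "hill_free (enc t) \<longleftrightarrow> hf t"
proof (induction t)
  case Lf
  then show ?case by (simp add: hill_free_hl)
next
  case (Nd a b)
  have lb: "enc b = [] \<or> last (enc b) = D" using last_enc[of b] by auto
  have la: "enc a = [] \<or> last (enc a) = D" using last_enc[of a] by auto
  have "hl 0 (enc (Nd a b)) \<longleftrightarrow> hl 0 (enc b) \<or> hl 0 (U # enc a @ [D])"
    using hl_append[OF lb, of 0 "U # enc a @ [D]"] by simp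
  also have "hl 0 (U # enc a @ [D]) \<longleftrightarrow> ph (U # enc a @ [D]) \<or> hl 1 (enc a @ [D])" by simp
  also have "hl 1 (enc a @ [D]) \<longleftrightarrow> False"
    using hl_append[OF la, of 1 "[D]"] hl_enc_pos[of 1 a] by simp
  also have "ph (U # enc a @ [D]) \<longleftrightarrow> a = Lf"
  proof (cases "a = Lf")
    case False
    then obtain r where "enc a = U # r" using hd_enc by blast
    then show ?thesis using False by simp
  qed simp
  finally show ?case using Nd by (auto simp add: hill_free_hl)
qed

definition gd :: "step list \<Rightarrow> nat \<Rightarrow> bool" where
  "gd w j \<longleftrightarrow> 0 < j \<and> j \<le> length w \<and> w ! (j - 1) = D \<and> (j = length w \<or> w ! j = U) \<and> ht (take j w) = 0"

lemma agdo_gd: "all_ground_desc_odd w \<longleftrightarrow> (\<forall>j. gd w j \<longrightarrow> odd (term_desc (take j w)))"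
  unfolding all_ground_desc_odd_def gd_def term_desc_def by blast

lemma gd_low:
  assumes "j \<le> length (enc b)"
  shows "gd (enc (Nd a b)) j \<longleftrightarrow> gd (enc b) j" "take j (enc (Nd a b)) = take j (enc b)"
proof -
  let ?X = "enc b" and ?w = "enc (Nd a b)"
  have w: "?w = ?X @ U # enc a @ [D]" by simp
  show "take j ?w = take j ?X" using assms by (simp del: enc_len)
  have n1: "0 < j \<Longrightarrow> ?w ! (j - 1) = ?X ! (j - 1)"
  proof -
    assume "0 < j"
    then have "j - 1 < length ?X" using assms by simp
    then show ?thesis unfolding w by (simp add: nth_append del: enc_len)
  qed
  have n2: "j = length ?X \<Longrightarrow> ?w ! j = U" unfolding w by (simp add: nth_append del: enc_len)
  have n3: "j < length ?X \<Longrightarrow> ?w ! j = ?X ! j" unfolding w by (simp add: nth_append del: enc_len)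
  have lw: "length ?X < length ?w" unfolding w by (simp del: enc_len)
  have tk: "take j ?w = take j ?X" using assms by (simp del: enc_len)
  show "gd ?w j \<longleftrightarrow> gd ?X j"
    unfolding gd_def tk
  proof (cases "j = length ?X")
    case True
    then show "(0 < j \<and> j \<le> length ?w \<and> ?w ! (j - 1) = D \<and> (j = length ?w \<or> ?w ! j = U) \<and> ht (take j ?X) = 0) =
      (0 < j \<and> j \<le> length ?X \<and> ?X ! (j - 1) = D \<and> (j = length ?X \<or> ?X ! j = U) \<and> ht (take j ?X) = 0)"
      using n1 n2 lw by auto
  next
    case False
    then have "j < length ?X" using assms by simp
    then show "(0 < j \<and> j \<le> length ?w \<and> ?w ! (j - 1) = D \<and> (j = length ?w \<or> ?w ! j = U) \<and> ht (take j ?X) = 0) =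
      (0 < j \<and> j \<le> length ?X \<and> ?X ! (j - 1) = D \<and> (j = length ?X \<or> ?X ! j = U) \<and> ht (take j ?X) = 0)"
      using n1 n3 lw by auto
  qed
qed

lemma gd_mid:
  assumes "length (enc b) < j" "j < length (enc (Nd a b))"
  shows "\<not> gd (enc (Nd a b)) j"
proof -
  obtain i where j: "j = length (enc b) + Suc i" using assms(1) by (metis add_Suc_right less_imp_Suc_add)
  have "i \<le> length (enc a)" using assms(2) j by (simp del: enc_len)
  then have "1 \<le> ht (take j (enc (Nd a b)))" using enc_prefix_pos j by blast
  then show ?thesis unfolding gd_def by simp
qed

lemma gd_top: "t \<noteq> Lf \<Longrightarrow> gd (enc t) (length (enc t))"
  unfolding gd_def using last1[of t]
  by (cases t) (auto simp: nth_append simp del: enc_len)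

lemma ag_enc: "all_ground_desc_odd (enc t) \<longleftrightarrow> ag t"
proof (induction t)
  case Lf
  then show ?case by (simp add: agdo_gd gd_def)
next
  case (Nd a b)
  let ?w = "enc (Nd a b)"
  have "(\<forall>j. gd ?w j \<longrightarrow> odd (term_desc (take j ?w))) \<longleftrightarrow>
        (\<forall>j. gd (enc b) j \<longrightarrow> odd (term_desc (take j (enc b)))) \<and> odd (term_desc ?w)"
  proof
    assume H: "\<forall>j. gd ?w j \<longrightarrow> odd (term_desc (take j ?w))"
    have "odd (term_desc ?w)" using H gd_top[of "Nd a b"] by fastforce
    moreover have "\<forall>j. gd (enc b) j \<longrightarrow> odd (term_desc (take j (enc b)))"
    proof (intro allI impI)
      fix j assume g: "gd (enc b) j"
      then have "j \<le> length (enc b)" unfolding gd_def by blast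
      then show "odd (term_desc (take j (enc b)))" using H g gd_low[of j b a] by metis
    qed
    ultimately show "(\<forall>j. gd (enc b) j \<longrightarrow> odd (term_desc (take j (enc b)))) \<and> odd (term_desc ?w)" by blast
  next
    assume H: "(\<forall>j. gd (enc b) j \<longrightarrow> odd (term_desc (take j (enc b)))) \<and> odd (term_desc ?w)"
    show "\<forall>j. gd ?w j \<longrightarrow> odd (term_desc (take j ?w))"
    proof (intro allI impI)
      fix j assume g: "gd ?w j"
      then have jl: "j \<le> length ?w" unfolding gd_def by blast
      show "odd (term_desc (take j ?w))"
      proof (cases "j \<le> length (enc b)")
        case True
        then show ?thesis using H g gd_low[of j b a] by metis
      next
        case False
        show ?thesis
        proof (cases "j = length ?w")
          case True
          then show ?thesis using H by simp
        next
          case False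
          then show ?thesis using gd_mid[of b j a] g jl \<open>\<not> j \<le> length (enc b)\<close> by simp
        qed
      qed
    qed
  qed
  then show ?case using Nd td_enc[of "Nd a b"] by (simp add: agdo_gd)
qed

definition phi :: "step list \<Rightarrow> step list" where
  "phi w = enc (Phi (THE t. enc t = w))"

lemma phi_enc[simp]: "phi (enc t) = enc (Phi t)"
proof -
  have "(THE s. enc s = enc t) = t" by (rule the_equality) (auto dest: enc_inj)
  then show ?thesis unfolding phi_def by simp
qed

lemma bij_sub:
  assumes "bij_betw f A A" "S \<subseteq> A" "T \<subseteq> A" "\<And>x. x \<in> A \<Longrightarrow> x \<in> S \<longleftrightarrow> f x \<in> T"
  shows "bij_betw f S T"
proof -
  have i: "inj_on f A" and im: "f ` A = A" using assms(1) unfolding bij_betw_def by auto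
  have inj: "inj_on f S" using inj_on_subset[OF i assms(2)] .
  have "f ` S = T"
  proof
    show "f ` S \<subseteq> T"
    proof
      fix y assume "y \<in> f ` S"
      then obtain x where "x \<in> S" "y = f x" by blast
      then show "y \<in> T" using assms(2) assms(4)[of x] by blast
    qed
    show "T \<subseteq> f ` S"
    proof
      fix y assume "y \<in> T"
      then have "y \<in> f ` A" using assms(3) im by blast
      then obtain x where "x \<in> A" "y = f x" by blast
      then show "y \<in> f ` S" using assms(4)[of x] \<open>y \<in> T\<close> by blast
    qed
  qed
  then show ?thesis using inj unfolding bij_betw_def by blast
qed

lemma dp_iff: "w \<in> dyck_paths n \<longleftrightarrow> (\<exists>t. w = enc t \<and> sz t = n)"
  unfolding dyck_paths_def using dyck_enc by simp

theorem mainTheorem6: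
  fixes n :: nat
  shows "\<exists>\<phi>. bij_betw \<phi> (dyck_paths n) (dyck_paths n)
    \<and> (\<forall>P \<in> dyck_paths n. valleys P = dxd (\<phi> P))
    \<and> bij_betw \<phi> {P \<in> dyck_paths n. even (term_desc P)} {P \<in> dyck_paths n. hill_free P}
    \<and> bij_betw \<phi> {P \<in> dyck_paths n. P \<noteq> [] \<and> all_ground_desc_odd P}
                   {P \<in> dyck_paths n. starts_UD P}"
proof (intro exI[of _ phi] conjI)
  let ?A = "dyck_paths n"
  have mem: "\<And>t. sz t = n \<Longrightarrow> enc t \<in> ?A" using dp_iff by blast
  have maps: "phi ` ?A \<subseteq> ?A"
  proof
    fix y assume "y \<in> phi ` ?A"
    then obtain x where "x \<in> ?A" "y = phi x" by blast
    then obtain t where "x = enc t" "sz t = n" using dp_iff by blast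
    then show "y \<in> ?A" using \<open>y = phi x\<close> mem[of "Phi t"] by simp
  qed
  have inj: "inj_on phi ?A"
  proof
    fix x y assume "x \<in> ?A" "y \<in> ?A" "phi x = phi y"
    then obtain s t where "x = enc s" "y = enc t" "enc (Phi s) = enc (Phi t)" unfolding dp_iff by auto
    then show "x = y" using enc_inj Phi_inj by metis
  qed
  have univ: "(UNIV :: step set) = {U, D}" using step.exhaust by auto
  have "?A \<subseteq> {xs. set xs \<subseteq> (UNIV :: step set) \<and> length xs = 2 * n}"
    unfolding dyck_paths_def dyck_def by auto
  moreover have "finite {xs. set xs \<subseteq> (UNIV :: step set) \<and> length xs = 2 * n}"
    by (rule finite_lists_length_eq) (simp add: univ)
  ultimately have fin: "finite ?A" by (rule finite_subset)
  have "phi ` ?A = ?A" using endo_inj_surj[OF fin maps inj] .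
  then show bij: "bij_betw phi ?A ?A" using inj bij_betw_def by blast
  show "\<forall>P \<in> ?A. valleys P = dxd (phi P)"
  proof
    fix P assume "P \<in> ?A"
    then obtain t where "P = enc t" using dp_iff by blast
    then show "valleys P = dxd (phi P)" by (simp add: valleys_enc dxd_enc Phi_V)
  qed
  show "bij_betw phi {P \<in> ?A. even (term_desc P)} {P \<in> ?A. hill_free P}"
  proof (rule bij_sub[OF bij])
    fix x assume "x \<in> ?A"
    then obtain t where t: "x = enc t" "sz t = n" using dp_iff by blast
    have "phi x \<in> ?A" using t mem[of "Phi t"] by simp
    then show "x \<in> {P \<in> ?A. even (term_desc P)} \<longleftrightarrow> phi x \<in> {P \<in> ?A. hill_free P}"
      using \<open>x \<in> ?A\<close> t by (simp add: td_enc hf_enc Phi_hf)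
  qed auto
  show "bij_betw phi {P \<in> ?A. P \<noteq> [] \<and> all_ground_desc_odd P} {P \<in> ?A. starts_UD P}"
  proof (rule bij_sub[OF bij])
    fix x assume "x \<in> ?A"
    then obtain t where t: "x = enc t" "sz t = n" using dp_iff by blast
    have "phi x \<in> ?A" using t mem[of "Phi t"] by simp
    then show "x \<in> {P \<in> ?A. P \<noteq> [] \<and> all_ground_desc_odd P} \<longleftrightarrow> phi x \<in> {P \<in> ?A. starts_UD P}"
      using \<open>x \<in> ?A\<close> t by (simp add: ag_enc su_enc Phi_su)
  qed auto
qed

end
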